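(* Let $\Omega$ be a nonempty set, let $\mathcal A$ be an algebra of subsets of $\Omega$, and let $\mathcal X_{\mathcal A}$ denote the set of bounded functions $X:\Omega\to\mathbb R$ that are measurable with respect to $\mathcal A$ (i.e. $\{X>x\}\in\mathcal A$ and $\{X\ge x\}\in\mathcal A$ for all $x\in\mathbb R$). For a mapping $\mathcal R:\mathcal X_{\mathcal A}\to\mathbb R$ the following are equivalent: (i) $\mathcal R$ satisfies ordinality, i.e. $\mathcal R(\phi\circ X)=\phi(\mathcal R(X))$ for all $X\in\mathcal X_{\mathcal A}$ and all increasing (non-strictly) continuous functions $\phi:\mathbb R\to\mathbb R$; (ii) $\mathcal R$ is a Choquet quantile, i.e. there exists a binary capacity $v$ on $\mathcal A$ such that $\mathcal R(X)=\int X\,\mathrm d v$ for all $X\in\mathcal X_{\mathcal A}$.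
   Context: A capacity on $\mathcal A$ is a function $w:\mathcal A\to\mathbb R$ that is increasing ($w(A)\le w(B)$ whenever $A\subseteq B$) with $w(\varnothing)=0$ and $w(\Omega)=1$; it is binary if it takes values only in $\{0,1\}$. For a capacity $w$ and bounded measurable $X$, the Choquet integral is $\int X\,\mathrm dw=\int_{-\infty}^0 (w(X\ge x)-1)\,\mathrm dx+\int_0^\infty w(X\ge x)\,\mathrm dx$. *)

theory Defs
  imports "HOL-Analysis.Analysis"
begin

text \<open>The ground set Omega is the universe of the (arbitrary, hence nonempty) type 'a;
  the algebra of subsets is given by the library predicate algebra UNIV A.\<close>

definition meas_bdd :: "'a set set \<Rightarrow> ('a \<Rightarrow> real) set" where
  "meas_bdd A = {X. (\<exists>M. \<forall>\<omega>. \<bar>X \<omega>\<bar> \<le> M) \<and>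
      (\<forall>x. {\<omega>. X \<omega> > x} \<in> A \<and> {\<omega>. X \<omega> \<ge> x} \<in> A)}"

definition capacity :: "'a set set \<Rightarrow> ('a set \<Rightarrow> real) \<Rightarrow> bool" where
  "capacity A w \<longleftrightarrow> (\<forall>B C. B \<in> A \<longrightarrow> C \<in> A \<longrightarrow> B \<subseteq> C \<longrightarrow> w B \<le> w C)
      \<and> w {} = 0 \<and> w UNIV = 1"

definition binary_capacity :: "'a set set \<Rightarrow> ('a set \<Rightarrow> real) \<Rightarrow> bool" where
  "binary_capacity A w \<longleftrightarrow> capacity A w \<and> (\<forall>B\<in>A. w B \<in> {0, 1})"

definition choquet :: "('a set \<Rightarrow> real) \<Rightarrow> ('a \<Rightarrow> real) \<Rightarrow> real" where
  "choquet w X = integral {..0} (\<lambda>x. w {\<omega>. X \<omega> \<ge> x} - 1)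
                + integral {0..} (\<lambda>x. w {\<omega>. X \<omega> \<ge> x})"

definition ordinal :: "'a set set \<Rightarrow> (('a \<Rightarrow> real) \<Rightarrow> real) \<Rightarrow> bool" where
  "ordinal A R \<longleftrightarrow> (\<forall>X \<in> meas_bdd A. \<forall>\<phi> :: real \<Rightarrow> real.
      mono \<phi> \<longrightarrow> continuous_on UNIV \<phi> \<longrightarrow> R (\<phi> \<circ> X) = \<phi> (R X))"

end

theory Submission
  imports Defs
begin

lemma int_helper:
  fixes f :: "real \<Rightarrow> real"
  assumes ab: "a \<le> b" and sub: "{a..b} \<subseteq> T"
    and fx: "\<And>x. x \<in> T \<Longrightarrow> x \<noteq> a \<Longrightarrow> x \<noteq> b \<Longrightarrow> f x = (if x \<in> {a..b} then c else 0)"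
  shows "(f has_integral (c * (b - a))) T"
proof -
  let ?g = "\<lambda>x::real. if x \<in> {a..b} then c else 0"
  have "((\<lambda>x. c) has_integral (c * (b - a))) {a..b}"
    using has_integral_const_real[of c a b] ab by (simp add: mult.commute)
  then have "(?g has_integral (c * (b - a))) {a..b}"
    by (rule iffD1[OF has_integral_cong, rotated]) auto
  then have "(?g has_integral (c * (b - a))) T"
    by (rule has_integral_on_superset) (use sub in auto)
  then show ?thesis
    by (rule has_integral_spike[where S="{a,b}", rotated 2]) (auto simp: fx)
qed

lemma choquet_step:
  assumes lo: "\<And>x. x < t \<Longrightarrow> w {\<omega>. X \<omega> \<ge> x} = 1"
    and hi: "\<And>x. x > t \<Longrightarrow> w {\<omega>. X \<omega> \<ge> x} = 0"
  shows "choquet w X = t"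
proof (cases "t \<ge> 0")
  case True
  have "((\<lambda>x. w {\<omega>. X \<omega> \<ge> x} - 1) has_integral (0 * (0 - 0))) {..0}"
    by (rule int_helper) (use True lo in auto)
  moreover have "((\<lambda>x. w {\<omega>. X \<omega> \<ge> x}) has_integral (1 * (t - 0))) {0..}"
    by (rule int_helper) (use True lo hi in auto)
  ultimately show ?thesis unfolding choquet_def by (simp add: integral_unique)
next
  case False
  have "((\<lambda>x. w {\<omega>. X \<omega> \<ge> x} - 1) has_integral ((-1) * (0 - t))) {..0}"
    by (rule int_helper) (use False lo hi in auto)
  moreover have "((\<lambda>x. w {\<omega>. X \<omega> \<ge> x}) has_integral (0 * (0 - 0))) {0..}"
    by (rule int_helper) (use False hi in auto)
  ultimately show ?thesis unfolding choquet_def by (simp add: integral_unique)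
qed


lemma upset_gt:
  fixes \<phi> :: "real \<Rightarrow> real"
  assumes m: "mono \<phi>" and c: "continuous_on UNIV \<phi>"
  shows "{x. \<phi> x > y} = {} \<or> {x. \<phi> x > y} = UNIV \<or> (\<exists>s. {x. \<phi> x > y} = {s<..})"
proof -
  let ?U = "{x. \<phi> x > y}"
  { assume ne: "?U \<noteq> {}" and nu: "?U \<noteq> UNIV"
    then obtain x0 where x0: "x0 \<notin> ?U" by auto
    have lb: "\<And>u. u \<in> ?U \<Longrightarrow> x0 < u"
      using x0 m by (metis (mono_tags, lifting) mem_Collect_eq monoD not_less order_less_le_trans)
    have bb: "bdd_below ?U" using lb by (meson bdd_below.I less_imp_le)
    define s where "s = Inf ?U"
    have op: "open ?U" using open_Collect_less[OF continuous_on_const c] by simp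
    have "?U = {s<..}"
    proof (intro set_eqI iffI)
      fix x assume xU: "x \<in> ?U"
      have "s \<le> x" unfolding s_def using xU bb by (rule cInf_lower)
      moreover have "x \<noteq> s"
      proof
        assume "x = s"
        with xU op obtain e where e: "e > 0" "ball s e \<subseteq> ?U" by (metis open_contains_ball)
        have "s - e/2 \<in> ball s e" using e(1) by (simp add: dist_real_def)
        with e(2) have "s - e/2 \<in> ?U" by blast
        then have "s \<le> s - e/2" unfolding s_def using bb by (rule cInf_lower)
        with e show False by simp
      qed
      ultimately show "x \<in> {s<..}" by simp
    next
      fix x assume "x \<in> {s<..}"
      then have "Inf ?U < x" by (simp add: s_def)
      then obtain u where "u \<in> ?U" "u < x" using cInf_less_iff[OF ne bb] by auto
      then show "x \<in> ?U" using m by (metis (mono_tags, lifting) mem_Collect_eq monoD less_imp_le order_less_le_trans)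
    qed
    then have "\<exists>s. ?U = {s<..}" by blast }
  then show ?thesis by blast
qed

lemma upset_ge:
  fixes \<phi> :: "real \<Rightarrow> real"
  assumes m: "mono \<phi>" and c: "continuous_on UNIV \<phi>"
  shows "{x. \<phi> x \<ge> y} = {} \<or> {x. \<phi> x \<ge> y} = UNIV \<or> (\<exists>s. {x. \<phi> x \<ge> y} = {s..})"
proof -
  let ?U = "{x. \<phi> x \<ge> y}"
  { assume ne: "?U \<noteq> {}" and nu: "?U \<noteq> UNIV"
    then obtain x0 where x0: "x0 \<notin> ?U" by auto
    have lb: "\<And>u. u \<in> ?U \<Longrightarrow> x0 < u"
      using x0 m by (metis (mono_tags, lifting) mem_Collect_eq monoD not_less order_trans)
    have bb: "bdd_below ?U" using lb by (meson bdd_below.I less_imp_le)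
    define s where "s = Inf ?U"
    have cl: "closed ?U" using closed_Collect_le[OF continuous_on_const c] by simp
    have sU: "s \<in> ?U" unfolding s_def using ne bb cl by (rule closed_contains_Inf)
    have "?U = {s..}"
    proof (intro set_eqI iffI)
      fix x assume xU: "x \<in> ?U"
      have "s \<le> x" unfolding s_def using xU bb by (rule cInf_lower)
      then show "x \<in> {s..}" by simp
    next
      fix x assume "x \<in> {s..}"
      then show "x \<in> ?U" using m sU by (metis (mono_tags, lifting) atLeast_iff mem_Collect_eq monoD order_trans)
    qed
    then have "\<exists>s. ?U = {s..}" by blast }
  then show ?thesis by blast
qed

lemma comp_meas:
  assumes alg: "algebra UNIV A" and X: "X \<in> meas_bdd A"
    and m: "mono \<phi>" and c: "continuous_on UNIV \<phi>"
  shows "(\<phi> \<circ> X) \<in> meas_bdd A"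
proof -
  interpret algebra UNIV A by (rule alg)
  obtain M where M: "\<And>\<omega>. \<bar>X \<omega>\<bar> \<le> M" using X unfolding meas_bdd_def by auto
  have XA: "\<And>x. {\<omega>. X \<omega> > x} \<in> A" "\<And>x. {\<omega>. X \<omega> \<ge> x} \<in> A" using X unfolding meas_bdd_def by auto
  have "\<bar>\<phi> (X \<omega>)\<bar> \<le> \<bar>\<phi> (-M)\<bar> + \<bar>\<phi> M\<bar>" for \<omega>
  proof -
    have a: "-M \<le> X \<omega>" "X \<omega> \<le> M" using M[of \<omega>] by linarith+
    have "\<phi> (-M) \<le> \<phi> (X \<omega>)" by (rule monoD[OF m a(1)])
    moreover have "\<phi> (X \<omega>) \<le> \<phi> M" by (rule monoD[OF m a(2)])
    ultimately show ?thesis by linarith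
  qed
  moreover have "{\<omega>. (\<phi> \<circ> X) \<omega> > y} \<in> A" for y
  proof -
    have eq: "{\<omega>. (\<phi> \<circ> X) \<omega> > y} = X -` {x. \<phi> x > y}" by auto
    from upset_gt[OF m c, of y]
    consider "{x. \<phi> x > y} = {}" | "{x. \<phi> x > y} = UNIV" | s where "{x. \<phi> x > y} = {s<..}"
      by blast
    then show ?thesis
    proof cases
      case 1 then show ?thesis unfolding eq by simp
    next
      case 2 then show ?thesis unfolding eq by simp
    next
      case 3
      have "X -` {s<..} = {\<omega>. X \<omega> > s}" by auto
      then show ?thesis unfolding eq 3 using XA(1) by simp
    qed
  qed
  moreover have "{\<omega>. (\<phi> \<circ> X) \<omega> \<ge> y} \<in> A" for y
  proof -
    have eq: "{\<omega>. (\<phi> \<circ> X) \<omega> \<ge> y} = X -` {x. \<phi> x \<ge> y}" by auto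
    from upset_ge[OF m c, of y]
    consider "{x. \<phi> x \<ge> y} = {}" | "{x. \<phi> x \<ge> y} = UNIV" | s where "{x. \<phi> x \<ge> y} = {s..}"
      by blast
    then show ?thesis
    proof cases
      case 1 then show ?thesis unfolding eq by simp
    next
      case 2 then show ?thesis unfolding eq by simp
    next
      case 3
      have "X -` {s..} = {\<omega>. X \<omega> \<ge> s}" by auto
      then show ?thesis unfolding eq 3 using XA(2) by simp
    qed
  qed
  ultimately show ?thesis unfolding meas_bdd_def
    by (intro CollectI conjI allI exI) (simp_all add: o_def)
qed


lemma quantile_exists:
  assumes bc: "binary_capacity A v" and X: "X \<in> meas_bdd A"
  shows "\<exists>t. (\<forall>x<t. v {\<omega>. X \<omega> \<ge> x} = 1) \<and> (\<forall>x>t. v {\<omega>. X \<omega> \<ge> x} = 0)"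
proof -
  have vm: "\<And>B C. B \<in> A \<Longrightarrow> C \<in> A \<Longrightarrow> B \<subseteq> C \<Longrightarrow> v B \<le> v C"
    and v0: "v {} = 0" and vb: "\<And>B. B \<in> A \<Longrightarrow> v B \<in> {0, 1}"
    using bc unfolding binary_capacity_def capacity_def by auto
  obtain M where M: "\<And>\<omega>. \<bar>X \<omega>\<bar> \<le> M" using X unfolding meas_bdd_def by auto
  have XA: "\<And>x. {\<omega>. X \<omega> \<ge> x} \<in> A" using X unfolding meas_bdd_def by auto
  define S where "S = {x. v {\<omega>. X \<omega> \<ge> x} = 1}"
  have "-M \<le> X \<omega>" for \<omega> using M[of \<omega>] by (simp add: abs_le_iff)
  then have "{\<omega>. X \<omega> \<ge> -M} = UNIV" by auto
  moreover have "v UNIV = 1" using bc unfolding binary_capacity_def capacity_def by auto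
  ultimately have "-M \<in> S" unfolding S_def by simp
  then have ne: "S \<noteq> {}" by auto
  have ub: "x \<le> M" if "x \<in> S" for x
  proof (rule ccontr)
    assume "\<not> x \<le> M"
    moreover have "X \<omega> \<le> M" for \<omega> using M[of \<omega>] by (simp add: abs_le_iff)
    ultimately have "{\<omega>. X \<omega> \<ge> x} = {}" by (auto simp: not_le) (meson order.trans not_le)
    with that v0 show False unfolding S_def by simp
  qed
  then have bdd: "bdd_above S" by (rule bdd_aboveI)
  define t where "t = Sup S"
  have "v {\<omega>. X \<omega> \<ge> x} = 1" if "x < t" for x
  proof -
    have "x < Sup S" using that t_def by simp
    then obtain x' where x': "x' \<in> S" "x < x'" using less_cSup_iff[OF ne bdd] by blast
    have "v {\<omega>. X \<omega> \<ge> x'} \<le> v {\<omega>. X \<omega> \<ge> x}"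
      by (rule vm[OF XA XA]) (use x' in auto)
    then have "1 \<le> v {\<omega>. X \<omega> \<ge> x}" using x' unfolding S_def by simp
    then show ?thesis using vb[OF XA, of x] by auto
  qed
  moreover have "v {\<omega>. X \<omega> \<ge> x} = 0" if "x > t" for x
  proof -
    have "x \<notin> S" using that cSup_upper[OF _ bdd, of x] unfolding t_def by force
    then show ?thesis using vb[OF XA, of x] unfolding S_def by auto
  qed
  ultimately show ?thesis by blast
qed

lemma comp_step:
  assumes bc: "binary_capacity A v" and X: "X \<in> meas_bdd A" and PX: "(\<phi> \<circ> X) \<in> meas_bdd A"
    and m: "mono \<phi>" and c: "continuous_on UNIV \<phi>"
    and lo: "\<And>x. x < t \<Longrightarrow> v {\<omega>. X \<omega> \<ge> x} = 1"
    and hi: "\<And>x. x > t \<Longrightarrow> v {\<omega>. X \<omega> \<ge> x} = 0"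
  shows "\<And>y. y < \<phi> t \<Longrightarrow> v {\<omega>. (\<phi> \<circ> X) \<omega> \<ge> y} = 1"
    and "\<And>y. y > \<phi> t \<Longrightarrow> v {\<omega>. (\<phi> \<circ> X) \<omega> \<ge> y} = 0"
proof -
  have vm: "\<And>B C. B \<in> A \<Longrightarrow> C \<in> A \<Longrightarrow> B \<subseteq> C \<Longrightarrow> v B \<le> v C"
    and vb: "\<And>B. B \<in> A \<Longrightarrow> v B \<in> {0, 1}"
    using bc unfolding binary_capacity_def capacity_def by auto
  have XA: "\<And>x. {\<omega>. X \<omega> \<ge> x} \<in> A" using X unfolding meas_bdd_def by auto
  have PA: "\<And>x. {\<omega>. (\<phi> \<circ> X) \<omega> \<ge> x} \<in> A" using PX unfolding meas_bdd_def by blast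
  show "v {\<omega>. (\<phi> \<circ> X) \<omega> \<ge> y} = 1" if y: "y < \<phi> t" for y
  proof -
    have op: "open {x. y < \<phi> x}" using open_Collect_less[OF continuous_on_const c] by simp
    then obtain e where e: "e > 0" "ball t e \<subseteq> {x. y < \<phi> x}" using y by (metis open_contains_ball mem_Collect_eq)
    have "t - e/2 \<in> ball t e" using e(1) by (simp add: dist_real_def)
    with e(2) have ys: "y < \<phi> (t - e/2)" by blast
    have "{\<omega>. X \<omega> \<ge> t - e/2} \<subseteq> {\<omega>. (\<phi> \<circ> X) \<omega> \<ge> y}"
    proof
      fix \<omega> assume "\<omega> \<in> {\<omega>. X \<omega> \<ge> t - e/2}"
      then have "\<phi> (t - e/2) \<le> \<phi> (X \<omega>)" by (intro monoD[OF m]) simp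
      with ys show "\<omega> \<in> {\<omega>. (\<phi> \<circ> X) \<omega> \<ge> y}" by simp
    qed
    then have "v {\<omega>. X \<omega> \<ge> t - e/2} \<le> v {\<omega>. (\<phi> \<circ> X) \<omega> \<ge> y}" by (rule vm[OF XA PA])
    moreover have "v {\<omega>. X \<omega> \<ge> t - e/2} = 1" using e(1) by (intro lo) simp
    ultimately show ?thesis using vb[OF PA, of y] by auto
  qed
  show "v {\<omega>. (\<phi> \<circ> X) \<omega> \<ge> y} = 0" if y: "y > \<phi> t" for y
  proof -
    have op: "open {x. \<phi> x < y}" using open_Collect_less[OF c continuous_on_const] by simp
    then obtain e where e: "e > 0" "ball t e \<subseteq> {x. \<phi> x < y}" using y by (metis open_contains_ball mem_Collect_eq)
    have "{\<omega>. (\<phi> \<circ> X) \<omega> \<ge> y} \<subseteq> {\<omega>. X \<omega> \<ge> t + e/2}"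
    proof
      fix \<omega> assume w: "\<omega> \<in> {\<omega>. (\<phi> \<circ> X) \<omega> \<ge> y}"
      show "\<omega> \<in> {\<omega>. X \<omega> \<ge> t + e/2}"
      proof (rule ccontr)
        assume "\<omega> \<notin> {\<omega>. X \<omega> \<ge> t + e/2}"
        then have lt: "X \<omega> < t + e/2" by simp
        show False
        proof (cases "X \<omega> \<le> t")
          case True
          then have "\<phi> (X \<omega>) \<le> \<phi> t" by (rule monoD[OF m])
          with w y show False by simp
        next
          case False
          then have "X \<omega> \<in> ball t e" using lt e(1) by (simp add: dist_real_def)
          with e(2) have "\<phi> (X \<omega>) < y" by blast
          with w show False by simp
        qed
      qed
    qed
    then have "v {\<omega>. (\<phi> \<circ> X) \<omega> \<ge> y} \<le> v {\<omega>. X \<omega> \<ge> t + e/2}" by (rule vm[OF PA XA])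
    moreover have "v {\<omega>. X \<omega> \<ge> t + e/2} = 0" using e(1) by (intro hi) simp
    ultimately show ?thesis using vb[OF PA, of y] by auto
  qed
qed


definition ind :: "'a set \<Rightarrow> 'a \<Rightarrow> real" where
  "ind B = (\<lambda>\<omega>. if \<omega> \<in> B then 1 else 0)"

definition clamp :: "real \<Rightarrow> real" where
  "clamp x = max 0 (min 1 x)"

lemma clamp_mono: "mono clamp"
  unfolding clamp_def by (rule monoI) auto

lemma clamp_cont: "continuous_on UNIV clamp"
  unfolding clamp_def by (intro continuous_intros)

lemma ind_meas:
  assumes alg: "algebra UNIV A" and B: "B \<in> A"
  shows "ind B \<in> meas_bdd A"
proof -
  interpret algebra UNIV A by (rule alg)
  have "\<bar>ind B \<omega>\<bar> \<le> 1" for \<omega> unfolding ind_def by auto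
  moreover have "{\<omega>. ind B \<omega> > x} = (if x < 0 then UNIV else if x < 1 then B else {})" for x
    unfolding ind_def by auto
  moreover have "{\<omega>. ind B \<omega> \<ge> x} = (if x \<le> 0 then UNIV else if x \<le> 1 then B else {})" for x
    unfolding ind_def by auto
  ultimately show ?thesis unfolding meas_bdd_def using B
    by (intro CollectI conjI allI exI) simp_all
qed

lemma const_meas:
  assumes alg: "algebra UNIV A"
  shows "(\<lambda>\<omega>. 0::real) \<in> meas_bdd A"
proof -
  interpret algebra UNIV A by (rule alg)
  have "{\<omega>. (0::real) > x} = (if x < 0 then UNIV else {})" for x by auto
  moreover have "{\<omega>. (0::real) \<ge> x} = (if x \<le> 0 then UNIV else {})" for x by auto
  ultimately show ?thesis unfolding meas_bdd_def
    by (intro CollectI conjI allI exI[of _ 0]) simp_all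
qed

lemma sum2_meas:
  assumes alg: "algebra UNIV A" and B: "B \<in> A" and C: "C \<in> A" and BC: "B \<subseteq> C"
  shows "(\<lambda>\<omega>. ind B \<omega> + ind C \<omega>) \<in> meas_bdd A"
proof -
  interpret algebra UNIV A by (rule alg)
  have "\<bar>ind B \<omega> + ind C \<omega>\<bar> \<le> 2" for \<omega> unfolding ind_def by auto
  moreover have "{\<omega>. ind B \<omega> + ind C \<omega> > x} =
     (if x < 0 then UNIV else if x < 1 then C else if x < 2 then B else {})" for x
    unfolding ind_def using BC by auto
  moreover have "{\<omega>. ind B \<omega> + ind C \<omega> \<ge> x} =
     (if x \<le> 0 then UNIV else if x \<le> 1 then C else if x \<le> 2 then B else {})" for x
    unfolding ind_def using BC by auto
  ultimately show ?thesis unfolding meas_bdd_def using B C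
    by (intro CollectI conjI allI exI) simp_all
qed

lemma shift_meas:
  assumes alg: "algebra UNIV A" and X: "X \<in> meas_bdd A"
  shows "(\<lambda>\<omega>. X \<omega> + ind {\<omega>. X \<omega> \<ge> x} \<omega>) \<in> meas_bdd A"
proof -
  interpret algebra UNIV A by (rule alg)
  obtain M where M: "\<And>\<omega>. \<bar>X \<omega>\<bar> \<le> M" using X unfolding meas_bdd_def by auto
  have XA: "\<And>x. {\<omega>. X \<omega> > x} \<in> A" "\<And>x. {\<omega>. X \<omega> \<ge> x} \<in> A" using X unfolding meas_bdd_def by auto
  let ?B = "{\<omega>. X \<omega> \<ge> x}"
  have "\<bar>X \<omega> + ind ?B \<omega>\<bar> \<le> M + 1" for \<omega> using M[of \<omega>] unfolding ind_def by auto
  moreover have "{\<omega>. X \<omega> + ind ?B \<omega> > y} = ({\<omega>. X \<omega> > y} - ?B) \<union> ({\<omega>. X \<omega> > y - 1} \<inter> ?B)" for y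
    unfolding ind_def by auto
  moreover have "{\<omega>. X \<omega> + ind ?B \<omega> \<ge> y} = ({\<omega>. X \<omega> \<ge> y} - ?B) \<union> ({\<omega>. X \<omega> \<ge> y - 1} \<inter> ?B)" for y
    unfolding ind_def by auto
  ultimately show ?thesis unfolding meas_bdd_def using XA
    by (intro CollectI conjI allI exI) (simp_all add: Un Int Diff)
qed

theorem theorem1:
  fixes A :: "'a set set" and R :: "('a \<Rightarrow> real) \<Rightarrow> real"
  assumes "algebra UNIV A"
  shows "ordinal A R \<longleftrightarrow>
    (\<exists>v. binary_capacity A v \<and> (\<forall>X \<in> meas_bdd A. R X = choquet v X))"
proof
  assume ord: "ordinal A R"
  have O: "\<And>X \<phi>. X \<in> meas_bdd A \<Longrightarrow> mono \<phi> \<Longrightarrow> continuous_on UNIV \<phi> \<Longrightarrow> R (\<phi> \<circ> X) = \<phi> (R X)"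
    using ord unfolding ordinal_def by blast
  have const: "R (\<lambda>\<omega>. c) = c" for c
  proof -
    have "R ((\<lambda>x. c) \<circ> (\<lambda>\<omega>. 0::real)) = c"
      by (rule O[OF const_meas[OF assms]]) (auto simp: mono_def intro: continuous_intros)
    then show ?thesis by (simp add: o_def)
  qed
  define v where "v B = R (ind B)" for B
  have bin: "v B \<in> {0, 1}" if B: "B \<in> A" for B
  proof -
    let ?r = "v B"
    have ci: "clamp \<circ> ind B = ind B" by (auto simp: clamp_def ind_def)
    have "?r = clamp ?r" unfolding v_def using O[OF ind_meas[OF assms B] clamp_mono clamp_cont] ci by simp
    then have r01: "0 \<le> ?r" "?r \<le> 1" unfolding clamp_def by (auto simp: max_def min_def split: if_splits)
    have sm: "mono (\<lambda>x. (clamp x)^2)"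
      by (rule monoI) (metis clamp_def clamp_mono max.cobounded1 monoD power_mono)
    have sc: "continuous_on UNIV (\<lambda>x. (clamp x)^2)"
      by (intro continuous_intros clamp_cont)
    have si: "(\<lambda>x. (clamp x)^2) \<circ> ind B = ind B" by (auto simp: clamp_def ind_def)
    have "?r = (clamp ?r)^2" unfolding v_def using O[OF ind_meas[OF assms B] sm sc] si by simp
    also have "clamp ?r = ?r" using r01 unfolding clamp_def by simp
    finally have "?r * (?r - 1) = 0" by (simp add: power2_eq_square algebra_simps)
    then show ?thesis by auto
  qed
  have vmono: "v B \<le> v C" if B: "B \<in> A" and C: "C \<in> A" and BC: "B \<subseteq> C" for B C
  proof -
    let ?Y = "\<lambda>\<omega>. ind B \<omega> + ind C \<omega>"
    have Y: "?Y \<in> meas_bdd A" by (rule sum2_meas[OF assms B C BC])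
    have c1: "clamp \<circ> ?Y = ind C" using BC by (intro ext) (auto simp: clamp_def ind_def)
    have m2: "mono (\<lambda>x. clamp (x - 1))" using clamp_mono by (auto simp: mono_def)
    have cc2: "continuous_on UNIV (\<lambda>x. clamp (x - 1))"
      unfolding clamp_def by (intro continuous_intros)
    have c2: "(\<lambda>x. clamp (x - 1)) \<circ> ?Y = ind B" using BC by (intro ext) (auto simp: clamp_def ind_def)
    have "v C = clamp (R ?Y)" unfolding v_def using O[OF Y clamp_mono clamp_cont] c1 by simp
    moreover have "v B = clamp (R ?Y - 1)" unfolding v_def using O[OF Y m2 cc2] c2 by simp
    ultimately show ?thesis using monoD[OF clamp_mono, of "R ?Y - 1" "R ?Y"] by simp
  qed
  have v0: "v {} = 0" unfolding v_def ind_def using const[of 0] by simp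
  have v1: "v UNIV = 1" unfolding v_def ind_def using const[of 1] by simp
  have bc: "binary_capacity A v"
    unfolding binary_capacity_def capacity_def using bin vmono v0 v1 by blast
  have "R X = choquet v X" if X: "X \<in> meas_bdd A" for X
  proof -
    have XA: "\<And>x. {\<omega>. X \<omega> \<ge> x} \<in> A" using X unfolding meas_bdd_def by auto
    have key: "R X = (\<lambda>w. min w x + max 0 (w - (x + 1))) (R (\<lambda>\<omega>. X \<omega> + ind {\<omega>. X \<omega> \<ge> x} \<omega>))
      \<and> v {\<omega>. X \<omega> \<ge> x} = clamp (R (\<lambda>\<omega>. X \<omega> + ind {\<omega>. X \<omega> \<ge> x} \<omega>) - x)" for x
    proof -
      let ?W = "\<lambda>\<omega>. X \<omega> + ind {\<omega>. X \<omega> \<ge> x} \<omega>"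
      let ?p = "\<lambda>w. min w x + max 0 (w - (x + 1))"
      let ?q = "\<lambda>w. clamp (w - x)"
      have W: "?W \<in> meas_bdd A" by (rule shift_meas[OF assms X])
      have pm: "mono ?p" by (rule monoI) auto
      have pc: "continuous_on UNIV ?p" by (intro continuous_intros)
      have qm: "mono ?q" using clamp_mono by (auto simp: mono_def)
      have qc: "continuous_on UNIV ?q"
      unfolding clamp_def by (intro continuous_intros)
      have pW: "?p \<circ> ?W = X" by (intro ext) (auto simp: ind_def)
      have qW: "?q \<circ> ?W = ind {\<omega>. X \<omega> \<ge> x}" by (intro ext) (auto simp: ind_def clamp_def)
      show ?thesis using O[OF W pm pc] O[OF W qm qc] pW qW unfolding v_def by simp
    qed
    show ?thesis
    proof (rule choquet_step[symmetric])
      fix x assume xt: "x < R X"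
      let ?r = "R (\<lambda>\<omega>. X \<omega> + ind {\<omega>. X \<omega> \<ge> x} \<omega>)"
      from key[of x] have k: "R X = min ?r x + max 0 (?r - (x + 1))" "v {\<omega>. X \<omega> \<ge> x} = clamp (?r - x)" by auto
      have "?r > x"
      proof (rule ccontr)
        assume "\<not> ?r > x"
        then have "R X \<le> x" using k(1) by simp
        with xt show False by simp
      qed
      then have "clamp (?r - x) > 0" unfolding clamp_def by simp
      with k(2) bin[OF XA[of x]] show "v {\<omega>. X \<omega> \<ge> x} = 1" by auto
    next
      fix x assume xt: "x > R X"
      let ?r = "R (\<lambda>\<omega>. X \<omega> + ind {\<omega>. X \<omega> \<ge> x} \<omega>)"
      from key[of x] have k: "R X = min ?r x + max 0 (?r - (x + 1))" "v {\<omega>. X \<omega> \<ge> x} = clamp (?r - x)" by auto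
      have "?r < x"
      proof (rule ccontr)
        assume "\<not> ?r < x"
        then have "R X \<ge> x" using k(1) by simp
        with xt show False by simp
      qed
      then have "clamp (?r - x) = 0" unfolding clamp_def by simp
      with k(2) show "v {\<omega>. X \<omega> \<ge> x} = 0" by auto
    qed
  qed
  with bc show "\<exists>v. binary_capacity A v \<and> (\<forall>X \<in> meas_bdd A. R X = choquet v X)" by blast
next
  assume "\<exists>v. binary_capacity A v \<and> (\<forall>X \<in> meas_bdd A. R X = choquet v X)"
  then obtain v where bc: "binary_capacity A v" and hv: "\<And>X. X \<in> meas_bdd A \<Longrightarrow> R X = choquet v X"
    by blast
  show "ordinal A R" unfolding ordinal_def
  proof (intro ballI allI impI)
    fix X and \<phi> :: "real \<Rightarrow> real"
    assume X: "X \<in> meas_bdd A" and m: "mono \<phi>" and c: "continuous_on UNIV \<phi>"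
    obtain t where lo: "\<And>x. x < t \<Longrightarrow> v {\<omega>. X \<omega> \<ge> x} = 1" and hi: "\<And>x. x > t \<Longrightarrow> v {\<omega>. X \<omega> \<ge> x} = 0"
      using quantile_exists[OF bc X] by blast
    have PX: "(\<phi> \<circ> X) \<in> meas_bdd A" by (rule comp_meas[OF assms X m c])
    have "choquet v X = t" by (rule choquet_step) (use lo hi in auto)
    moreover have "choquet v (\<phi> \<circ> X) = \<phi> t"
      by (rule choquet_step) (use comp_step[OF bc X PX m c lo hi] in auto)
    ultimately show "R (\<phi> \<circ> X) = \<phi> (R X)" using hv[OF X] hv[OF PX] by simp
  qed
qed

end
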